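(* Let $\mathcal{L}\subset\mathcal{L}_*$ be lineages with hierarchical generators $\mathcal{H},\mathcal{H}_*$, and assume $\mathcal{H}$ is linearly independent (as a set of functions on $\mathbb{R}^d$). Let $\mathcal{R}=\mathcal{L}_*\setminus\mathcal{L}$. Then for every $\varphi\in\mathcal{R}\cap\mathcal{H}$ there exist $k\ge1$ and $\varphi_*\in(\mathcal{H}_*\setminus\mathcal{H})\cap\mathrm{ch}^k(\varphi)$.
   Context: Fix integers $d\ge1$, $n\ge2$, $m\ge2$; $s=n-1$, $p=m-1$. B-splines $\varphi^\ell_{\vec i}(\vec x)=\prod_kQ(n^\ell x_k-i_k)$ on $\mathbb{R}^d$ for $\ell\ge0$, $\vec i\in\mathbb{Z}^d$, $Q$ the uniform B-spline of order $m$ with knots $0,\dots,m$; $\mathfrak{B}$ the set of all of them; $\mathcal{B}^0=\{\varphi^0_{\vec i}:\vec i\in[-p:0]^d\}$. Children $\mathrm{ch}(\varphi^\ell_{\vec i})=\{\varphi^{\ell+1}_{\vec k}:n\vec i\le\vec k\le n\vec i+sm\}$, extended to sets by union, $\mathrm{ch}^k$ the $k$-fold application. A lineage is a finite $\mathcal{L}\subset\mathfrak{B}$ with $\mathcal{L}\subset\mathcal{B}^0\cup\mathrm{ch}(\mathcal{L})$; its hierarchical generator is $(\mathcal{B}^0\cup\mathrm{ch}(\mathcal{L}))\setminus\mathcal{L}$. *)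

theory Defs
  imports "HOL-Analysis.Analysis"
begin

text \<open>Uniform (cardinal) B-spline of order m with knots 0,1,...,m, via the
Cox--de Boor recursion. Order 1 is the indicator of [0,1).\<close>
fun Qspl :: "nat \<Rightarrow> real \<Rightarrow> real" where
  "Qspl 0 x = 0"
| "Qspl (Suc 0) x = (if 0 \<le> x \<and> x < 1 then 1 else 0)"
| "Qspl (Suc (Suc k)) x =
     (x * Qspl (Suc k) x + (real k + 2 - x) * Qspl (Suc k) (x - 1)) / (real k + 1)"

definition bspl :: "nat \<Rightarrow> nat \<Rightarrow> nat \<Rightarrow> int ^ 'd \<Rightarrow> (real ^ 'd::finite \<Rightarrow> real)" where
  "bspl n m l i = (\<lambda>x. \<Prod>j\<in>UNIV. Qspl m (real n ^ l * x $ j - real_of_int (i $ j)))"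

definition Bsplines :: "nat \<Rightarrow> nat \<Rightarrow> (real ^ 'd::finite \<Rightarrow> real) set" where
  "Bsplines n m = {bspl n m l i | l i. True}"

definition B0 :: "nat \<Rightarrow> nat \<Rightarrow> (real ^ 'd::finite \<Rightarrow> real) set" where
  "B0 n m = {bspl n m 0 i | i. \<forall>j. - (int m - 1) \<le> i $ j \<and> i $ j \<le> 0}"

definition ch :: "nat \<Rightarrow> nat \<Rightarrow> (real ^ 'd::finite \<Rightarrow> real) \<Rightarrow> (real ^ 'd \<Rightarrow> real) set" where
  "ch n m \<phi> = {bspl n m (Suc l) k | l i k. \<phi> = bspl n m l i \<and>
      (\<forall>j. int n * i $ j \<le> k $ j \<and> k $ j \<le> int n * i $ j + (int n - 1) * int m)}"

definition chS :: "nat \<Rightarrow> nat \<Rightarrow> (real ^ 'd::finite \<Rightarrow> real) set \<Rightarrow> (real ^ 'd \<Rightarrow> real) set" where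
  "chS n m S = (\<Union>\<phi>\<in>S. ch n m \<phi>)"

definition lineage :: "nat \<Rightarrow> nat \<Rightarrow> (real ^ 'd::finite \<Rightarrow> real) set \<Rightarrow> bool" where
  "lineage n m L \<longleftrightarrow> finite L \<and> L \<subseteq> Bsplines n m \<and> L \<subseteq> B0 n m \<union> chS n m L"

definition hgen :: "nat \<Rightarrow> nat \<Rightarrow> (real ^ 'd::finite \<Rightarrow> real) set \<Rightarrow> (real ^ 'd \<Rightarrow> real) set" where
  "hgen n m L = (B0 n m \<union> chS n m L) - L"

definition lin_indep_fun :: "('a \<Rightarrow> real) set \<Rightarrow> bool" where
  "lin_indep_fun S \<longleftrightarrow> (\<forall>T c. finite T \<and> T \<subseteq> S \<and> (\<forall>x. (\<Sum>f\<in>T. c f * f x) = 0)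
      \<longrightarrow> (\<forall>f\<in>T. c f = 0))"

end

theory Submission
  imports Defs "HOL-Computational_Algebra.Polynomial"
begin


definition Lop :: "(real \<Rightarrow> real) \<Rightarrow> real poly \<Rightarrow> real \<Rightarrow> real" where
  "Lop f p y = (\<Sum>i\<le>degree p. coeff p i * f (y - real i))"

lemma Lop_bound: "degree p \<le> N \<Longrightarrow> Lop f p y = (\<Sum>i\<le>N. coeff p i * f (y - real i))"
  unfolding Lop_def
  by (rule sum.mono_neutral_left) (auto simp: coeff_eq_0)

lemma Lop_add: "Lop f (p + q) y = Lop f p y + Lop f q y"
proof -
  let ?N = "degree p + degree q"
  have "Lop f (p+q) y = (\<Sum>i\<le>?N. coeff (p+q) i * f (y - real i))"
    by (rule Lop_bound) (meson degree_add_le le_add1 le_add2)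
  also have "\<dots> = (\<Sum>i\<le>?N. coeff p i * f (y - real i)) + (\<Sum>i\<le>?N. coeff q i * f (y - real i))"
    by (simp add: sum.distrib algebra_simps)
  also have "\<dots> = Lop f p y + Lop f q y"
    by (simp add: Lop_bound[of p ?N] Lop_bound[of q ?N])
  finally show ?thesis .
qed

lemma Lop_smult: "Lop f (smult a p) y = a * Lop f p y"
proof -
  have "Lop f (smult a p) y = (\<Sum>i\<le>degree p. coeff (smult a p) i * f (y - real i))"
    by (rule Lop_bound) simp
  thus ?thesis by (simp add: Lop_def sum_distrib_left mult.assoc)
qed

lemma Lop_0 [simp]: "Lop f 0 y = 0"
  by (simp add: Lop_def)

lemma Lop_const [simp]: "Lop f [:a:] y = a * f y"
  by (simp add: Lop_def)

lemma Lop_pCons0: "Lop f (pCons 0 p) y = Lop f p (y - 1)"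
proof -
  have "Lop f (pCons 0 p) y = (\<Sum>i\<le>Suc (degree p). coeff (pCons 0 p) i * f (y - real i))"
    by (rule Lop_bound) (simp add: degree_pCons_le)
  also have "\<dots> = (\<Sum>i\<le>degree p. coeff p i * f (y - 1 - real i))"
    by (subst sum.atMost_Suc_shift) (simp add: algebra_simps)
  finally show ?thesis by (simp add: Lop_def)
qed

lemma Lop_pCons: "Lop f (pCons a p) y = a * f y + Lop f p (y - 1)"
proof -
  have "pCons a p = [:a:] + pCons 0 p" by simp
  then show ?thesis by (simp only: Lop_add Lop_pCons0 Lop_const)
qed

lemma Lop_mult: "Lop f (p * q) y = Lop (Lop f p) q y"
proof (induction q arbitrary: y)
  case 0 show ?case by simp
next
  case (pCons a q)
  have "p * pCons a q = smult a p + pCons 0 (p * q)" by simp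
  then show ?case using pCons.IH
    by (simp only: Lop_add Lop_smult Lop_pCons0 Lop_pCons)
qed

lemma Lop_fun_add: "Lop (\<lambda>u. f u + g u) p y = Lop f p y + Lop g p y"
  by (simp add: Lop_def sum.distrib algebra_simps)

lemma Lop_fun_scale: "Lop (\<lambda>u. c * f u) p y = c * Lop f p y"
  by (simp add: Lop_def sum_distrib_left algebra_simps)

lemma Lop_monom: "Lop f (monom 1 k) y = f (y - real k)"
  by (induction k arbitrary: y) (simp_all add: monom_Suc Lop_pCons0 monom_0 algebra_simps)

lemma Lop_pcompose:
  assumes "n > 0"
  shows "Lop f (pcompose p (monom 1 n)) (real n * x) = Lop (\<lambda>u. f (real n * u)) p x"
proof (induction p arbitrary: x)
  case 0 show ?case by simp
next
  case (pCons a p)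
  have "Lop f (pcompose (pCons a p) (monom 1 n)) (real n * x)
      = a * f (real n * x) + Lop f (pcompose p (monom 1 n) * monom 1 n) (real n * x)"
    by (simp add: pcompose_pCons Lop_add mult.commute)
  also have "Lop f (pcompose p (monom 1 n) * monom 1 n) (real n * x)
     = Lop f (pcompose p (monom 1 n)) (real n * (x - 1))"
    by (simp only: Lop_mult Lop_monom) (simp add: algebra_simps)
  finally show ?case using pCons.IH by (simp add: Lop_pCons)
qed

lemma Lop_diff: "Lop f (p - q) y = Lop f p y - Lop f q y"
proof -
  have "p - q = p + smult (-1) q" by simp
  then show ?thesis by (simp only: Lop_add Lop_smult)
qed

lemma Lop_cong: "(\<And>u. f u = g u) \<Longrightarrow> Lop f p y = Lop g p y"
  by (simp add: Lop_def)

definition TP :: "nat \<Rightarrow> real \<Rightarrow> real" where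
  "TP k y = (if 0 \<le> y then y ^ k else 0)"

lemma TP_x: "y * TP k (y - real i) = TP (Suc k) (y - real i) + real i * TP k (y - real i)"
  by (simp add: TP_def algebra_simps)

lemma coeff_pCons0_pderiv: "coeff (pCons 0 (pderiv p)) i = real i * coeff p i"
  by (cases i) (simp_all add: coeff_pderiv)

lemma Lop_TP_x:
  "y * Lop (TP k) p y = Lop (TP (Suc k)) p y + Lop (TP k) (pCons 0 (pderiv p)) y"
proof -
  let ?N = "Suc (degree p)"
  have d: "degree (pCons 0 (pderiv p)) \<le> ?N"
    using degree_pCons_le[of 0 "pderiv p"] degree_pderiv[of p] by simp
  have "y * Lop (TP k) p y = (\<Sum>i\<le>?N. coeff p i * (y * TP k (y - real i)))"
    by (simp add: Lop_bound[of p ?N] sum_distrib_left algebra_simps)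
  also have "\<dots> = (\<Sum>i\<le>?N. coeff p i * TP (Suc k) (y - real i))
       + (\<Sum>i\<le>?N. coeff (pCons 0 (pderiv p)) i * TP k (y - real i))"
    by (simp add: TP_x coeff_pCons0_pderiv sum.distrib algebra_simps)
  also have "\<dots> = Lop (TP (Suc k)) p y + Lop (TP k) (pCons 0 (pderiv p)) y"
    using d by (simp add: Lop_bound[of p ?N] Lop_bound[of "pCons 0 (pderiv p)" ?N])
  finally show ?thesis .
qed

lemma b_pderiv_zero:
  fixes k :: nat
  defines "p \<equiv> [:1,-1:] ^ Suc k :: real poly"
  shows "pCons 0 (pderiv p) - pCons 0 (pCons 0 (pderiv p)) + smult (real k + 1) (pCons 0 p) = 0"
proof -
  have pd: "pderiv p = smult (real (Suc k)) ([:1,-1:] ^ k) * [:-1:]"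
    unfolding p_def pderiv_power_Suc by (simp add: pderiv_pCons)
  have "pCons 0 (pderiv p) - pCons 0 (pCons 0 (pderiv p)) + smult (real k + 1) (pCons 0 p)
      = pCons 0 ([:1,-1:] * pderiv p + smult (real k + 1) p)"
    by (simp add: algebra_simps)
  also have "[:1,-1:] * pderiv p + smult (real k + 1) p = 0"
  proof -
    have pp: "p = [:1,-1:] * [:1,-1:]^k" unfolding p_def by (simp only: power_Suc)
    have m1: "\<And>x::real poly. x * [:-1:] = - x" by (simp add: mult_poly_0_left)
    show ?thesis unfolding pd unfolding pp by (simp add: m1 algebra_simps)
  qed
  finally show ?thesis by simp
qed

lemma Qspl_TP: "Qspl (Suc k) y = Lop (TP k) ([:1,-1:] ^ Suc k) y / fact k"
proof (induction k arbitrary: y)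
  case 0
  show ?case by (simp add: Lop_pCons TP_def)
next
  case (Suc k)
  define p where "p = ([:1,-1:] ^ Suc k :: real poly)"
  define r where "r = pCons 0 (pderiv p)"
  have e1: "y * Lop (TP k) p y = Lop (TP (Suc k)) p y + Lop (TP k) r y"
    unfolding r_def by (rule Lop_TP_x)
  have e2: "(y-1) * Lop (TP k) p (y-1) = Lop (TP (Suc k)) p (y-1) + Lop (TP k) r (y-1)"
    unfolding r_def by (rule Lop_TP_x)
  have e3: "Lop (TP (Suc k)) ([:1,-1:] * p) y = Lop (TP (Suc k)) p y - Lop (TP (Suc k)) p (y-1)"
  proof -
    have "[:1,-1:] * p = p - pCons 0 p" by simp
    then show ?thesis by (simp only: Lop_diff Lop_pCons0)
  qed
  have e4: "Lop (TP k) r y - Lop (TP k) r (y-1) + (real k + 1) * Lop (TP k) p (y-1) = 0"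
  proof -
    have "Lop (TP k) (r - pCons 0 r + smult (real k + 1) (pCons 0 p)) y = 0"
      unfolding r_def p_def using b_pderiv_zero[of k] by simp
    then show ?thesis by (simp only: Lop_diff Lop_add Lop_smult Lop_pCons0)
  qed
  have key: "y * Lop (TP k) p y + (real k + 2 - y) * Lop (TP k) p (y-1)
      = Lop (TP (Suc k)) ([:1,-1:] * p) y"
  proof -
    have "(real k + 2 - y) * Lop (TP k) p (y-1)
       = (real k + 1) * Lop (TP k) p (y-1) - (y-1) * Lop (TP k) p (y-1)"
      by (simp add: algebra_simps)
    then show ?thesis using e1 e2 e3 e4 by linarith
  qed
  have q1: "Qspl (Suc k) y = Lop (TP k) p y / fact k" unfolding p_def by (rule Suc.IH)
  have q2: "Qspl (Suc k) (y-1) = Lop (TP k) p (y-1) / fact k" unfolding p_def by (rule Suc.IH)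
  have pw: "[:1,-1:]^Suc(Suc k) = [:1,-1:]*p" unfolding p_def by (simp only: power_Suc)
  have "Qspl (Suc (Suc k)) y = (y * Qspl (Suc k) y + (real k + 2 - y) * Qspl (Suc k) (y - 1)) / (real k + 1)"
    by simp
  also have "\<dots> = (y * Lop (TP k) p y + (real k + 2 - y) * Lop (TP k) p (y-1)) / (fact k * (real k + 1))"
    by (simp only: q1 q2) (simp add: field_simps)
  also have "\<dots> = Lop (TP (Suc k)) ([:1,-1:] ^ Suc (Suc k)) y / fact (Suc k)"
    by (simp only: key pw fact_Suc) (simp add: algebra_simps)
  finally show ?case .
qed

definition Apol :: "nat \<Rightarrow> real poly" where
  "Apol n = (\<Sum>s<n. monom 1 s)"

lemma b_eq: "[:1,-1:] = (1 - monom 1 1 :: real poly)"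
  by (simp add: monom_Suc monom_0 one_pCons)

lemma bA: "[:1,-1:] * Apol n = 1 - monom 1 n"
proof (induction n)
  case 0 show ?case by (simp add: Apol_def monom_0)
next
  case (Suc n)
  have "[:1,-1:] * Apol (Suc n) = [:1,-1:] * Apol n + [:1,-1:] * monom 1 n"
    by (simp add: Apol_def algebra_simps)
  also have "[:1,-1:] * monom 1 n = monom 1 n - monom (1::real) (Suc n)"
    unfolding b_eq by (simp add: algebra_simps mult_monom)
  finally show ?case using Suc.IH by simp
qed

lemma pc_b: "pcompose [:1,-1:] (monom 1 n) = (1 - monom 1 n :: real poly)"
  by (simp add: pcompose_pCons algebra_simps)

lemma pcompose_pow: "pcompose (p ^ k) q = (pcompose p q) ^ k"
  by (induction k) (simp_all add: pcompose_mult pcompose_1)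

lemma degree_Apol: "degree (Apol n) \<le> n - 1"
  unfolding Apol_def
  by (rule degree_sum_le) (auto intro: order_trans[OF degree_monom_le])

lemma TP_scale: "n > 0 \<Longrightarrow> TP k (real n * u) = real n ^ k * TP k u"
  by (simp add: TP_def zero_le_mult_iff power_mult_distrib)

lemma Qspl_refine:
  assumes "n > 0"
  shows "Qspl (Suc k) x = (\<Sum>r\<le>(n-1)*Suc k. (coeff (Apol n ^ Suc k) r / real n ^ k) * Qspl (Suc k) (real n * x - real r))"
proof -
  let ?b = "[:1,-1:] :: real poly"
  let ?m = "Suc k"
  have "Lop (Qspl ?m) (Apol n ^ ?m) (real n * x) = Lop (\<lambda>u. (1 / fact k) * Lop (TP k) (?b ^ ?m) u) (Apol n ^ ?m) (real n * x)"
    by (rule Lop_cong) (simp add: Qspl_TP)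
  also have "\<dots> = (1 / fact k) * Lop (TP k) (?b ^ ?m * Apol n ^ ?m) (real n * x)"
    by (simp only: Lop_fun_scale Lop_mult)
  also have "?b ^ ?m * Apol n ^ ?m = pcompose (?b ^ ?m) (monom 1 n)"
    by (simp only: power_mult_distrib[symmetric] bA pcompose_pow pc_b)
  also have "Lop (TP k) (pcompose (?b ^ ?m) (monom 1 n)) (real n * x) = Lop (\<lambda>u. TP k (real n * u)) (?b ^ ?m) x"
    by (rule Lop_pcompose[OF assms])
  also have "\<dots> = Lop (\<lambda>u. real n ^ k * TP k u) (?b ^ ?m) x"
    by (rule Lop_cong) (simp add: TP_scale assms)
  also have "\<dots> = real n ^ k * Lop (TP k) (?b ^ ?m) x"
    by (rule Lop_fun_scale)
  finally have F: "Lop (Qspl ?m) (Apol n ^ ?m) (real n * x) = 1 / fact k * (real n ^ k * Lop (TP k) (?b ^ ?m) x)" .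
  have E: "Lop (Qspl ?m) (Apol n ^ ?m) (real n * x) = real n ^ k * Qspl ?m x"
    using F Qspl_TP[of k x] by simp
  have deg: "degree (Apol n ^ ?m) \<le> (n-1) * ?m"
    using degree_power_le[of "Apol n" ?m] degree_Apol[of n]
    by (meson le_trans mult_le_mono1)
  have "Qspl ?m x = Lop (Qspl ?m) (Apol n ^ ?m) (real n * x) / real n ^ k"
    using E assms by simp
  also have "\<dots> = (\<Sum>r\<le>(n-1)*?m. coeff (Apol n ^ ?m) r * Qspl ?m (real n * x - real r)) / real n ^ k"
    by (simp only: Lop_bound[OF deg])
  finally show ?thesis by (simp add: sum_divide_distrib)
qed



lemma Qspl_zero: "y < 0 \<or> y \<ge> real k + 1 \<Longrightarrow> Qspl (Suc k) y = 0"
proof (induction k arbitrary: y)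
  case 0 then show ?case by auto
next
  case (Suc k)
  have "Qspl (Suc k) y = 0" "Qspl (Suc k) (y-1) = 0" using Suc by auto
  then show ?case by simp
qed

lemma Qspl_nonneg: "Qspl (Suc k) y \<ge> 0"
proof (induction k arbitrary: y)
  case 0 then show ?case by auto
next
  case (Suc k)
  show ?case
  proof (cases "y < 0 \<or> y \<ge> real k + 2")
    case True
    then have "y < 0 \<or> y \<ge> real (Suc k) + 1" by auto
    then show ?thesis using Qspl_zero[of y "Suc k"] by simp
  next
    case False
    then have "y \<ge> 0" "real k + 2 - y \<ge> 0" by auto
    then show ?thesis using Suc.IH[of y] Suc.IH[of "y-1"] by simp
  qed
qed

lemma Qspl_pos: "0 < y \<Longrightarrow> y < real k + 1 \<Longrightarrow> Qspl (Suc k) y > 0"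
proof (induction k arbitrary: y)
  case 0 then show ?case by auto
next
  case (Suc k)
  note IH = Suc.IH and pr = Suc.prems
  have nn: "Qspl (Suc k) y \<ge> 0" "Qspl (Suc k) (y-1) \<ge> 0" by (rule Qspl_nonneg)+
  have "y * Qspl (Suc k) y + (real k + 2 - y) * Qspl (Suc k) (y - 1) > 0"
  proof (cases "y < real k + 1")
    case True
    then have "Qspl (Suc k) y > 0" using IH pr by blast
    then have a: "y * Qspl (Suc k) y > 0" using pr by (intro mult_pos_pos) auto
    have b: "(real k + 2 - y) * Qspl (Suc k) (y - 1) \<ge> 0" using nn pr by (intro mult_nonneg_nonneg) auto
    show ?thesis using a b by linarith
  next
    case False
    have "Qspl (Suc k) (y-1) > 0"
    proof (cases k)
      case 0 then show ?thesis using False pr by simp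
    next
      case (Suc k')
      have "0 < y - 1" "y - 1 < real k + 1" using False pr Suc by auto
      then show ?thesis using IH by blast
    qed
    then have a: "(real k + 2 - y) * Qspl (Suc k) (y - 1) > 0" using pr by (intro mult_pos_pos) auto
    have b: "y * Qspl (Suc k) y \<ge> 0" using nn pr by (intro mult_nonneg_nonneg) auto
    show ?thesis using a b by linarith
  qed
  then show ?case by (simp del: Qspl.simps add: Qspl.simps(3))
qed

lemma bspl_level_ne:
  fixes i i' :: "int ^ 'd::finite"
  assumes n: "n \<ge> 2" and ll: "l < l'" and eq: "bspl n (Suc k) l i = (bspl n (Suc k) l' i' :: real ^ 'd \<Rightarrow> real)"
  shows False
proof -
  define a where "a = real n ^ l"
  define b where "b = real n ^ l'"
  define M where "M = real k + 1"
  have a0: "a > 0" unfolding a_def using n by simp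
  have e: "b = a * real n ^ (l' - l)"
    unfolding a_def b_def using ll by (simp add: power_add[symmetric])
  have "real n ^ 1 \<le> real n ^ (l' - l)"
    by (rule power_increasing) (use ll n in auto)
  moreover have "real n \<ge> 2" using n by simp
  ultimately have "real n ^ (l' - l) \<ge> 2" unfolding power_one_right by linarith
  then have ba: "b \<ge> 2 * a" unfolding e using a0
    by (metis mult.commute mult_left_mono less_imp_le)
  define xt :: "real \<Rightarrow> real ^ 'd" where "xt t = (\<chi> j. (real_of_int (i$j) + t) / a)" for t
  obtain j0 :: 'd where True by blast
  have val: "bspl n (Suc k) l' i' (xt t) \<noteq> 0" if "0 < t" "t < M" for t
  proof -
    have "bspl n (Suc k) l i (xt t) = (\<Prod>j\<in>(UNIV::'d set). Qspl (Suc k) t)"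
      unfolding bspl_def xt_def a_def[symmetric] using a0 by simp
    also have "\<dots> > 0" using Qspl_pos[of t k] that unfolding M_def by (intro prod_pos) auto
    finally show ?thesis using eq by simp
  qed
  have bnd: "0 \<le> b * xt t $ j0 - real_of_int (i'$j0) \<and> b * xt t $ j0 - real_of_int (i'$j0) < M"
    if "0 < t" "t < M" for t
  proof -
    have "(\<Prod>j\<in>UNIV. Qspl (Suc k) (b * xt t $ j - real_of_int (i' $ j))) \<noteq> 0"
      using val[OF that] unfolding bspl_def b_def by simp
    then have "Qspl (Suc k) (b * xt t $ j0 - real_of_int (i' $ j0)) \<noteq> 0"
      by (simp add: prod_zero_iff)
    then show ?thesis using Qspl_zero[of "b * xt t $ j0 - real_of_int (i' $ j0)" k] unfolding M_def by linarith
  qed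
  have M0: "M > 0" unfolding M_def by simp
  have u1: "0 \<le> b * xt (M/8) $ j0 - real_of_int (i'$j0)" using bnd[of "M/8"] M0 by auto
  have u2: "b * xt (7*M/8) $ j0 - real_of_int (i'$j0) < M" using bnd[of "7*M/8"] M0 by auto
  have "b * xt (7*M/8) $ j0 - b * xt (M/8) $ j0 = b * (3*M/4) / a"
    unfolding xt_def using a0 by (simp add: field_simps)
  also have "\<dots> \<ge> 2 * a * (3*M/4) / a"
    using ba a0 M0 by (intro divide_right_mono mult_right_mono) auto
  also have "2 * a * (3*M/4) / a = 3*M/2" using a0 by simp
  finally show False using u1 u2 M0 by linarith
qed

definition lev :: "nat \<Rightarrow> nat \<Rightarrow> (real ^ 'd::finite \<Rightarrow> real) \<Rightarrow> nat" where
  "lev n m f = (THE l. \<exists>i. f = bspl n m l i)"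

lemma lev_bspl:
  assumes "n \<ge> 2" "m \<ge> 1"
  shows "lev n m (bspl n m l i :: real ^ 'd::finite \<Rightarrow> real) = l"
proof -
  obtain k where m: "m = Suc k" using assms(2) by (cases m) auto
  show ?thesis unfolding lev_def
  proof (rule the_equality)
    show "\<exists>i'. bspl n m l i = bspl n m l i'" by blast
  next
    fix l' assume "\<exists>i'. (bspl n m l i :: real ^ 'd \<Rightarrow> real) = bspl n m l' i'"
    then obtain i' where e: "(bspl n m l i :: real ^ 'd \<Rightarrow> real) = bspl n m l' i'" by blast
    show "l' = l"
    proof (cases l l' rule: linorder_cases)
      case less then show ?thesis using bspl_level_ne[OF assms(1) less, of k i i'] e m by simp
    next
      case greater then show ?thesis using bspl_level_ne[OF assms(1) greater, of k i' i] e m by simp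
    qed simp
  qed
qed

lemma bspl_refine:
  fixes i :: "int ^ 'd::finite"
  assumes n: "n > 0"
  shows "bspl n (Suc k) l i x = (\<Sum>g\<in>PiE UNIV (\<lambda>_. {..(n-1)*Suc k}).
     (\<Prod>j\<in>UNIV. coeff (Apol n ^ Suc k) (g j) / real n ^ k) * bspl n (Suc k) (Suc l) (\<chi> j. int n * i$j + int (g j)) x)"
proof -
  define c where "c r = coeff (Apol n ^ Suc k) r / real n ^ k" for r
  define R where "R = (n-1)*Suc k"
  define y where "y j = real n ^ l * x $ j - real_of_int (i $ j)" for j
  have "bspl n (Suc k) l i x = (\<Prod>j\<in>UNIV. Qspl (Suc k) (y j))"
    unfolding bspl_def y_def ..
  also have "\<dots> = (\<Prod>j\<in>UNIV. \<Sum>r\<le>R. c r * Qspl (Suc k) (real n * y j - real r))"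
    unfolding c_def R_def by (rule prod.cong[OF refl]) (rule Qspl_refine[OF n])
  also have "\<dots> = (\<Sum>g\<in>PiE UNIV (\<lambda>_. {..R}). \<Prod>j\<in>UNIV. c (g j) * Qspl (Suc k) (real n * y j - real (g j)))"
    by (rule prod_sum_PiE) auto
  also have "\<dots> = (\<Sum>g\<in>PiE UNIV (\<lambda>_. {..R}). (\<Prod>j\<in>UNIV. c (g j)) * bspl n (Suc k) (Suc l) (\<chi> j. int n * i$j + int (g j)) x)"
  proof (rule sum.cong[OF refl])
    fix g :: "'d \<Rightarrow> nat"
    have eq: "\<And>j. real n * y j - real (g j) = real n ^ Suc l * x $ j - real_of_int ((\<chi> j. int n * i$j + int (g j)) $ j)"
      unfolding y_def by (simp add: algebra_simps)
    then show "(\<Prod>j\<in>UNIV. c (g j) * Qspl (Suc k) (real n * y j - real (g j))) =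
      (\<Prod>j\<in>UNIV. c (g j)) * bspl n (Suc k) (Suc l) (\<chi> j. int n * i$j + int (g j)) x"
      unfolding bspl_def by (simp only: eq prod.distrib)
  qed
  finally show ?thesis unfolding c_def R_def .
qed

definition inspan :: "('a \<Rightarrow> real) set \<Rightarrow> ('a \<Rightarrow> real) \<Rightarrow> bool" where
  "inspan X f \<longleftrightarrow> (\<exists>T c. finite T \<and> T \<subseteq> X \<and> (\<forall>x. f x = (\<Sum>t\<in>T. c t * t x)))"

lemma inspan_base: "f \<in> X \<Longrightarrow> inspan X f"
  unfolding inspan_def by (rule exI[of _ "{f}"], rule exI[of _ "\<lambda>_. 1"]) auto

lemma inspan_zero: "inspan X (\<lambda>x. 0)"
  unfolding inspan_def by (rule exI[of _ "{}"]) auto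

lemma inspan_comb:
  assumes "inspan X f" "inspan X g"
  shows "inspan X (\<lambda>x. a * f x + g x)"
proof -
  obtain T1 c1 where 1: "finite T1" "T1 \<subseteq> X" "\<forall>x. f x = (\<Sum>t\<in>T1. c1 t * t x)"
    using assms(1) unfolding inspan_def by blast
  obtain T2 c2 where 2: "finite T2" "T2 \<subseteq> X" "\<forall>x. g x = (\<Sum>t\<in>T2. c2 t * t x)"
    using assms(2) unfolding inspan_def by blast
  define c where "c t = a * (if t \<in> T1 then c1 t else 0) + (if t \<in> T2 then c2 t else 0)" for t
  have "a * f x + g x = (\<Sum>t\<in>T1 \<union> T2. c t * t x)" for x
  proof -
    have s1: "(\<Sum>t\<in>T1 \<union> T2. (if t \<in> T1 then c1 t * t x else 0)) = (\<Sum>t\<in>T1. c1 t * t x)"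
      using 1(1) 2(1) sum.inter_restrict[of "T1 \<union> T2" "\<lambda>t. c1 t * t x" T1] by (simp add: Int_absorb1)
    have s2: "(\<Sum>t\<in>T1 \<union> T2. (if t \<in> T2 then c2 t * t x else 0)) = (\<Sum>t\<in>T2. c2 t * t x)"
      using 1(1) 2(1) sum.inter_restrict[of "T1 \<union> T2" "\<lambda>t. c2 t * t x" T2] by (simp add: Int_absorb1)
    have "(\<Sum>t\<in>T1 \<union> T2. c t * t x) = a * (\<Sum>t\<in>T1 \<union> T2. (if t \<in> T1 then c1 t * t x else 0))
        + (\<Sum>t\<in>T1 \<union> T2. (if t \<in> T2 then c2 t * t x else 0))"
    proof -
      have "(\<Sum>t\<in>T1 \<union> T2. c t * t x) = (\<Sum>t\<in>T1 \<union> T2. a * (if t \<in> T1 then c1 t * t x else 0)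
          + (if t \<in> T2 then c2 t * t x else 0))"
        by (rule sum.cong) (auto simp: c_def algebra_simps)
      then show ?thesis by (simp only: sum.distrib sum_distrib_left)
    qed
    then show ?thesis using s1 s2 1(3) 2(3) by simp
  qed
  then show ?thesis unfolding inspan_def using 1 2 by blast
qed

lemma inspan_sum:
  assumes "finite G" "\<And>g. g \<in> G \<Longrightarrow> inspan X (F g)"
  shows "inspan X (\<lambda>x. \<Sum>g\<in>G. a g * F g x)"
  using assms
proof (induction G rule: finite_induct)
  case empty then show ?case by (simp add: inspan_zero)
next
  case (insert g G)
  have "inspan X (\<lambda>x. a g * F g x + (\<Sum>g\<in>G. a g * F g x))"
    using insert by (intro inspan_comb) auto
  then show ?case using insert by simp
qed

lemma chS_mem: "\<psi> \<in> chS n m S \<longleftrightarrow> (\<exists>\<phi>\<in>S. \<psi> \<in> ch n m \<phi>)"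
  by (simp add: chS_def)

lemma desc_lev:
  assumes "n \<ge> 2" "m \<ge> 1" "\<phi> \<in> Bsplines n m"
  shows "\<psi> \<in> (chS n m ^^ k) {\<phi>} \<Longrightarrow> \<psi> \<in> Bsplines n m \<and> lev n m \<psi> = lev n m \<phi> + k"
proof (induction k arbitrary: \<psi>)
  case 0 then show ?case using assms by simp
next
  case (Suc k)
  have "\<psi> \<in> chS n m ((chS n m ^^ k) {\<phi>})" using Suc.prems by simp
  then obtain \<phi>' where p: "\<phi>' \<in> (chS n m ^^ k) {\<phi>}" "\<psi> \<in> ch n m \<phi>'"
    using chS_mem by blast
  then obtain l i kk where e: "\<psi> = bspl n m (Suc l) kk" "\<phi>' = bspl n m l i"
    unfolding ch_def by blast
  have "lev n m \<phi>' = lev n m \<phi> + k" using Suc.IH p(1) by blast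
  then show ?case using e by (auto simp: Bsplines_def lev_bspl[OF assms(1,2)])
qed

lemma desc_step: "\<psi> \<in> (chS n m ^^ k) {\<phi>} \<Longrightarrow> \<kappa> \<in> ch n m \<psi> \<Longrightarrow> \<kappa> \<in> (chS n m ^^ Suc k) {\<phi>}"
  using chS_mem by fastforce

lemma main_claim:
  fixes Ls :: "(real ^ 'd::finite \<Rightarrow> real) set"
  assumes n: "n \<ge> 2" and m: "m \<ge> 2" and fin: "finite Ls" and sub: "Ls \<subseteq> Bsplines n m"
    and phi: "\<phi> \<in> Ls"
  shows "\<psi> \<in> Ls \<Longrightarrow> \<psi> \<in> (chS n m ^^ k) {\<phi>} \<Longrightarrow>
    inspan {u. u \<in> chS n m Ls \<and> u \<notin> Ls \<and> (\<exists>k\<ge>1. u \<in> (chS n m ^^ k) {\<phi>})} \<psi>"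
proof (induction "Max (lev n m ` Ls) - lev n m \<psi>" arbitrary: \<psi> k rule: less_induct)
  case less
  let ?X = "{u. u \<in> chS n m Ls \<and> u \<notin> Ls \<and> (\<exists>k\<ge>1. u \<in> (chS n m ^^ k) {\<phi>})}"
  let ?M = "Max (lev n m ` Ls)"
  obtain l i where psi: "\<psi> = bspl n m l i" using less.prems(1) sub by (auto simp: Bsplines_def)
  obtain kk where mk: "m = Suc kk" using m by (cases m) auto
  have m1: "m \<ge> 1" using m by simp
  define G where "G = PiE (UNIV :: 'd set) (\<lambda>_. {..(n-1)*m})"
  define a where "a g = (\<Prod>j\<in>UNIV. coeff (Apol n ^ m) (g j) / real n ^ kk)" for g :: "'d \<Rightarrow> nat"
  define F where "F g = bspl n m (Suc l) (\<chi> j. int n * i$j + int (g j))" for g :: "'d \<Rightarrow> nat"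
  have psi_eq: "\<psi> = (\<lambda>x. \<Sum>g\<in>G. a g * F g x)"
    unfolding psi G_def a_def F_def mk using n by (intro ext bspl_refine) simp
  have finG: "finite G" unfolding G_def by (intro finite_PiE) auto
  have "inspan ?X (F g)" if g: "g \<in> G" for g
  proof -
    have box: "int n * i$j \<le> (\<chi> j. int n * i$j + int (g j)) $ j \<and>
        (\<chi> j. int n * i$j + int (g j)) $ j \<le> int n * i$j + (int n - 1) * int m" for j
    proof -
      have "g j \<le> (n-1)*m" using g unfolding G_def by (auto simp: PiE_iff)
      then have "int (g j) \<le> int ((n-1)*m)" by (simp only: of_nat_le_iff)
      also have "int ((n-1)*m) = (int n - 1) * int m" using n by (simp add: of_nat_diff)
      finally show ?thesis by simp
    qed
    have ch: "F g \<in> ch n m \<psi>"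
      unfolding ch_def mem_Collect_eq
      apply (rule exI[of _ l], rule exI[of _ i], rule exI[of _ "\<chi> j. int n * i$j + int (g j)"])
      using box by (simp add: psi F_def)
    have desc: "F g \<in> (chS n m ^^ Suc k) {\<phi>}" by (rule desc_step[OF less.prems(2) ch])
    show ?thesis
    proof (cases "F g \<in> Ls")
      case True
      have lF: "lev n m (F g) = Suc l" unfolding F_def by (rule lev_bspl[OF n m1])
      have lp: "lev n m \<psi> = l" unfolding psi by (rule lev_bspl[OF n m1])
      have "lev n m (F g) \<le> ?M" using True fin by (intro Max_ge) auto
      then have "?M - lev n m (F g) < ?M - lev n m \<psi>" using lF lp by simp
      then show ?thesis by (rule less.hyps[OF _ True desc])
    next
      case False
      have "F g \<in> chS n m Ls" using ch less.prems(1) chS_mem by blast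
      then show ?thesis using False desc by (intro inspan_base CollectI conjI exI[of _ "Suc k"]) auto
    qed
  qed
  then have "inspan ?X (\<lambda>x. \<Sum>g\<in>G. a g * F g x)" using finG by (intro inspan_sum) auto
  then show ?case using psi_eq by simp
qed

theorem lemma6p4:
  fixes n m :: nat and L Ls :: "(real ^ 'd::finite \<Rightarrow> real) set"
  assumes "n \<ge> 2" and "m \<ge> 2"
    and "lineage n m L" and "lineage n m Ls" and "L \<subseteq> Ls"
    and "lin_indep_fun (hgen n m L)"
  shows "\<forall>\<phi> \<in> (Ls - L) \<inter> hgen n m L. \<exists>k::nat. k \<ge> 1 \<and>
           (\<exists>\<phi>s. \<phi>s \<in> (hgen n m Ls - hgen n m L) \<inter> (chS n m ^^ k) {\<phi>})"
proof
  fix \<phi> assume phi: "\<phi> \<in> (Ls - L) \<inter> hgen n m L"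
  show "\<exists>k::nat. k \<ge> 1 \<and> (\<exists>\<phi>s. \<phi>s \<in> (hgen n m Ls - hgen n m L) \<inter> (chS n m ^^ k) {\<phi>})"
  proof (rule ccontr)
    assume H: "\<not> ?thesis"
    have fin: "finite Ls" and sub: "Ls \<subseteq> Bsplines n m" using assms(4) by (auto simp: lineage_def)
    have phiLs: "\<phi> \<in> Ls" using phi by blast
    have phiB: "\<phi> \<in> Bsplines n m" using phiLs sub by blast
    let ?X = "{u. u \<in> chS n m Ls \<and> u \<notin> Ls \<and> (\<exists>k\<ge>1. u \<in> (chS n m ^^ k) {\<phi>})}"
    have "inspan ?X \<phi>"
      using main_claim[OF assms(1,2) fin sub phiLs phiLs, of 0] by simp
    then obtain T c where T: "finite T" "T \<subseteq> ?X" "\<forall>x. \<phi> x = (\<Sum>t\<in>T. c t * t x)"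
      unfolding inspan_def by blast
    have TH: "t \<in> hgen n m L" and Tne: "t \<noteq> \<phi>" if "t \<in> T" for t
    proof -
      from that T(2) obtain k where k: "k \<ge> 1" "t \<in> (chS n m ^^ k) {\<phi>}" "t \<in> chS n m Ls" "t \<notin> Ls"
        by blast
      have "t \<in> hgen n m Ls" using k unfolding hgen_def by blast
      then show "t \<in> hgen n m L" using H k by blast
      have "lev n m t = lev n m \<phi> + k" using desc_lev[OF assms(1) _ phiB k(2)] assms(2) by simp
      then show "t \<noteq> \<phi>" using k(1) by auto
    qed
    define c' where "c' = c(\<phi> := -1)"
    have phinT: "\<phi> \<notin> T" using Tne by blast
    have "(\<Sum>f\<in>insert \<phi> T. c' f * f x) = 0" for x
    proof -
      have "(\<Sum>f\<in>insert \<phi> T. c' f * f x) = - \<phi> x + (\<Sum>f\<in>T. c' f * f x)"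
        using T(1) phinT by (simp add: c'_def)
      also have "(\<Sum>f\<in>T. c' f * f x) = (\<Sum>f\<in>T. c f * f x)"
        using phinT by (intro sum.cong) (auto simp: c'_def)
      finally have "(\<Sum>f\<in>insert \<phi> T. c' f * f x) = - \<phi> x + (\<Sum>f\<in>T. c f * f x)" .
      moreover have "\<phi> x = (\<Sum>f\<in>T. c f * f x)" using T(3) by blast
      ultimately show ?thesis by (simp only: add.commute diff_conv_add_uminus[symmetric] diff_self)
    qed
    moreover have "insert \<phi> T \<subseteq> hgen n m L" using TH phi by blast
    ultimately have "\<forall>f\<in>insert \<phi> T. c' f = 0"
      using assms(6) T(1) unfolding lin_indep_fun_def by blast
    then show False by (simp add: c'_def)
  qed
qed

end
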